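(* Let $F_k$ denote the Fibonacci numbers ($F_0=0$, $F_1=1$, $F_{k+2}=F_k+F_{k+1}$). For all integers $i,j$ for which all indices below are nonnegative, $\gcd(F_{i-1}+F_{j+1},\,F_i-F_j)=\gcd(F_{i-3}+F_{j+3},\,F_{i-2}-F_{j+2})$. *)

theory Defs
  imports "HOL-Number_Theory.Fib"
begin

end

theory Submission
  imports Defs
begin

lemma gcd_aux: "gcd (A::int) B = gcd (2*A - B) (B - A)"
proof -
  have "2*A - B = A - (B - A)" by simp
  hence "gcd (2*A - B) (B - A) = gcd A (B - A)" using gcd_diff1[of A "B - A"] by simp
  also have "\<dots> = gcd (B - A) A" by (rule gcd.commute)
  also have "\<dots> = gcd B A" by (rule gcd_diff1)
  finally show ?thesis by (simp add: gcd.commute)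
qed

theorem lemma2p3p1:
  fixes i j :: nat
  assumes "i \<ge> 3"
  shows "gcd (int (fib (i - 1)) + int (fib (j + 1))) (int (fib i) - int (fib j))
       = gcd (int (fib (i - 3)) + int (fib (j + 3))) (int (fib (i - 2)) - int (fib (j + 2)))"
proof -
  obtain n where i: "i = n + 3" using assms by (metis add.commute le_add_diff_inverse)
  have e1: "fib (n+2) = fib n + fib (n+1)" using fib_plus_2[of n] by simp
  have e2: "fib (n+3) = fib (n+1) + fib (n+2)" by (simp add: numeral_3_eq_3 numeral_2_eq_2)
  have e3: "fib (j+2) = fib j + fib (j+1)" using fib_plus_2[of j] by simp
  have e4: "fib (j+3) = fib (j+1) + fib (j+2)" by (simp add: numeral_3_eq_3 numeral_2_eq_2)
  have s: "i - 1 = n + 2" "i - 3 = n" "i - 2 = n + 1" using i by auto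
  show ?thesis unfolding s i
    apply (subst gcd_aux)
    apply (rule arg_cong2[where f=gcd])
    using e1 e2 e3 e4 by simp_all
qed

end
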